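(* Let $k\ge 2$ and let $\mathbb{R}^+=H_1\sqcup\cdots\sqcup H_k$ be a partition of the positive reals into pairwise disjoint nonempty subsets, each closed under addition and multiplication. Then at least one of the sets $H_i$ is not Lebesgue measurable. *)

theory Defs
  imports "HOL-Analysis.Analysis"
begin

end

theory Submission
  imports Defs
begin
lemma steinhaus_sum:
  fixes B :: "real set"
  assumes cB: "compact B" and sub: "B \<subseteq> {c..c+d}" and d: "d > 0"
    and mB: "measure lebesgue B > 3/4*d" and s: "\<bar>s - (2*c+d)\<bar> < d/4"
  shows "\<exists>y\<in>B. s - y \<in> B"
proof (rule ccontr)
  assume nex: "\<not> ?thesis"
  define R where "R = (\<lambda>y. (-1) *\<^sub>R y + s) ` B"
  have R_eq: "R = (\<lambda>y. s - y) ` B" by (auto simp: R_def)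
  have disj: "B \<inter> R = {}" using nex by (auto simp: R_eq)
  have cR: "compact R" unfolding R_eq by (intro compact_continuous_image continuous_intros cB)
  have mR: "measure lebesgue R = measure lebesgue B" unfolding R_def
    using measure_lebesgue_affine[of "-1" s B] by simp
  have "measure lebesgue (B \<union> R) = measure lebesgue B + measure lebesgue R"
    using disj cR cB by (intro measure_Un_AE) (auto intro: lmeasurable_compact)
  moreover have "B \<union> R \<subseteq> {c - d/4 .. c + 5*d/4}"
  proof
    fix x assume "x \<in> B \<union> R"
    then show "x \<in> {c - d/4 .. c + 5*d/4}"
    proof
      assume "x \<in> B" then show ?thesis using sub d by auto
    next
      assume "x \<in> R"
      then obtain y where y: "y \<in> B" "x = s - y" by (auto simp: R_eq)
      then have "c \<le> y" "y \<le> c + d" using sub by auto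
      moreover have "s - (2*c+d) < d/4" "-(d/4) < s - (2*c+d)" using s by linarith+
      ultimately show ?thesis using y by simp
    qed
  qed
  then have "measure lebesgue (B \<union> R) \<le> measure lebesgue {c - d/4 .. c + 5*d/4}"
    using lmeasurable_compact[OF compact_Un[OF cB cR]] by (intro measure_mono_fmeasurable) auto
  moreover have "measure lebesgue {c - d/4 .. c + 5*d/4} = 3/2 * d" using d by simp
  ultimately show False using mR mB by linarith
qed

lemma density_interval:
  fixes K U :: "real set"
  assumes cK: "compact K" and oU: "open U" and KU: "K \<subseteq> U" and mU: "U \<in> lmeasurable"
    and lt: "measure lebesgue U < 4/3 * measure lebesgue K" and pos: "measure lebesgue K > 0"
  shows "\<exists>c d. d > 0 \<and> measure lebesgue (K \<inter> {c..c+d}) > 3/4 * d"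
proof (rule ccontr)
  assume H: "\<not> ?thesis"
  hence le: "\<And>c d. d > 0 \<Longrightarrow> measure lebesgue (K \<inter> {c..c+d}) \<le> 3/4*d"
    by (meson not_less)
  obtain \<delta> where \<delta>: "\<delta>>0" "\<forall>x\<in>K. \<forall>y\<in>-U. \<delta> \<le> dist x y"
    using separate_compact_closed[OF cK, of "-U"] oU KU by auto
  obtain a where a: "K \<subseteq> cbox (-a) a"
    using bounded_subset_cbox_symmetric compact_imp_bounded cK by blast
  define e where "e = \<delta>/2"
  have e: "e > 0" "e < \<delta>" using \<delta> by (auto simp: e_def)
  define N where "N = nat \<lceil>2*a/e\<rceil>"
  define I where "I m = {-a + real m * e ..< -a + (real m + 1) * e}" for m :: nat
  define M where "M = {m \<in> {..N}. K \<inter> I m \<noteq> {}}"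
  have Imeas: "I m \<in> lmeasurable" for m
    unfolding I_def by (rule bounded_set_imp_lmeasurable) auto
  have Imeasure: "measure lebesgue (I m) = e" for m
    using e unfolding I_def by (simp add: algebra_simps)
  have cover: "K \<subseteq> (\<Union>m\<le>N. I m)"
  proof
    fix x assume "x \<in> K"
    then have x: "-a \<le> x" "x \<le> a" using a by auto
    define m where "m = nat \<lfloor>(x+a)/e\<rfloor>"
    have nn: "0 \<le> (x+a)/e" using x e by simp
    then have rm: "real m = of_int \<lfloor>(x+a)/e\<rfloor>" unfolding m_def by simp
    have "real m \<le> (x+a)/e" "(x+a)/e < real m + 1" using rm by linarith+
    then have "real m * e \<le> x + a" "x + a < (real m + 1) * e"
      using e by (simp_all add: field_simps)
    then have "x \<in> I m" unfolding I_def by auto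
    moreover have "m \<le> N"
    proof -
      have "(x+a)/e \<le> 2*a/e" using x e by (simp add: divide_right_mono)
      then have "\<lfloor>(x+a)/e\<rfloor> \<le> \<lceil>2*a/e\<rceil>" by (meson floor_le_ceiling floor_mono order_trans)
      then show ?thesis unfolding m_def N_def by linarith
    qed
    ultimately show "x \<in> (\<Union>m\<le>N. I m)" by auto
  qed
  have disj: "disjoint_family_on I S" for S
  proof -
    have "I m \<inter> I m' = {}" if "m < m'" for m m'
    proof -
      have "real m + 1 \<le> real m'" using that by simp
      then have "(real m + 1) * e \<le> real m' * e" using e by (simp add: mult_right_mono)
      then show ?thesis unfolding I_def by auto
    qed
    then show ?thesis unfolding disjoint_family_on_def
      by (metis Int_commute linorder_neqE_nat)
  qed
  have IU: "I m \<subseteq> U" if "m \<in> M" for m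
  proof
    fix y assume y: "y \<in> I m"
    have "K \<inter> I m \<noteq> {}" using \<open>m \<in> M\<close> by (simp add: M_def)
    then obtain x where x: "x \<in> K" "x \<in> I m" by blast
    have "dist x y < \<delta>" using x y e unfolding I_def dist_real_def by (auto simp: algebra_simps abs_less_iff)
    then show "y \<in> U" using \<delta> x by force
  qed
  have KI: "K \<inter> I m \<in> lmeasurable" for m
    using Imeas lmeasurable_compact[OF cK] by (intro fmeasurable.Int) auto
  have "measure lebesgue K = measure lebesgue (\<Union>m\<le>N. K \<inter> I m)"
    using cover by (metis Int_UN_distrib inf.absorb_iff1)
  also have "\<dots> = (\<Sum>m\<le>N. measure lebesgue (K \<inter> I m))"
    using KI disj[of "{..N}"] by (intro measure_UNION') (auto simp: disjoint_family_on_def pairwise_def disjnt_def)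
  also have "\<dots> = (\<Sum>m\<in>M. measure lebesgue (K \<inter> I m))"
    by (rule sum.mono_neutral_right) (auto simp: M_def)
  also have "\<dots> \<le> (\<Sum>m\<in>M. 3/4 * e)"
  proof (rule sum_mono)
    fix m assume "m \<in> M"
    have "K \<inter> I m \<subseteq> K \<inter> {-a + real m * e .. (-a + real m * e) + e}"
      unfolding I_def by (auto simp: algebra_simps)
    then have "measure lebesgue (K \<inter> I m) \<le> measure lebesgue (K \<inter> {-a + real m * e .. (-a + real m * e) + e})"
      using KI[of m] by (intro measure_mono_fmeasurable) (auto intro!: fmeasurable.Int lmeasurable_compact cK)
    also have "\<dots> \<le> 3/4 * e" using le e by blast
    finally show "measure lebesgue (K \<inter> I m) \<le> 3/4 * e" .
  qed
  also have "\<dots> = 3/4 * (\<Sum>m\<in>M. measure lebesgue (I m))"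
    by (simp add: Imeasure sum_distrib_left)
  also have "\<dots> = 3/4 * measure lebesgue (\<Union>m\<in>M. I m)"
    using Imeas disj[of M] by (subst measure_UNION') (auto simp: M_def disjoint_family_on_def pairwise_def disjnt_def)
  also have "\<dots> \<le> 3/4 * measure lebesgue U"
  proof -
    have "measure lebesgue (\<Union>m\<in>M. I m) \<le> measure lebesgue U"
    proof (intro measure_mono_fmeasurable)
      have "finite M" by (simp add: M_def)
      then show "(\<Union>m\<in>M. I m) \<in> sets lebesgue" using Imeas by (auto intro!: sets.finite_UN)
    qed (use IU mU in auto)
    then show ?thesis by simp
  qed
  finally show False using lt pos by linarith
qed

lemma pos_meas:
  "S \<in> lmeasurable \<Longrightarrow> S \<notin> null_sets lebesgue \<Longrightarrow> measure lebesgue S > 0"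
  by (meson negligible_iff_measure0 negligible_iff_null_sets zero_less_measure_iff)
lemma meas_lt:
  "S \<in> lmeasurable \<Longrightarrow> emeasure lebesgue S < ennreal e \<Longrightarrow> e > 0 \<Longrightarrow> measure lebesgue S < e"
  by (metis Sigma_Algebra.measure_def enn2real_less_iff fmeasurableD2 top.not_eq_extremum)
lemma null_bounded:
  fixes A :: "real set"
  assumes "\<And>n::nat. A \<inter> {- real n..real n} \<in> null_sets lebesgue"
  shows "A \<in> null_sets lebesgue"
proof -
  have "A = (\<Union>n. A \<inter> {- real n..real n})"
  proof (intro set_eqI iffI)
    fix x assume "x \<in> A"
    obtain n where "\<bar>x\<bar> \<le> real n" using real_arch_simple by blast
    then have "x \<in> A \<inter> {- real n..real n}" using \<open>x \<in> A\<close> by (auto simp: abs_le_iff)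
    then show "x \<in> (\<Union>n. A \<inter> {- real n..real n})" by blast
  qed auto
  also have "\<dots> \<in> null_sets lebesgue" using assms by (rule null_sets_UN)
  finally show ?thesis .
qed

lemma interval_in_semigroup:
  fixes A :: "real set"
  assumes Am: "A \<in> sets lebesgue" and An: "A \<notin> null_sets lebesgue"
    and add: "\<And>x y. x\<in>A \<Longrightarrow> y\<in>A \<Longrightarrow> x+y\<in>A"
  shows "\<exists>\<alpha> \<beta>. \<alpha> < \<beta> \<and> {\<alpha><..<\<beta>} \<subseteq> A"
proof -
  obtain n :: nat where n: "A \<inter> {- real n..real n} \<notin> null_sets lebesgue"
    using null_bounded An by blast
  define A' where "A' = A \<inter> {- real n..real n}"
  have A'm: "A' \<in> lmeasurable" unfolding A'_def
    by (rule bounded_set_imp_lmeasurable) (use Am in auto)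
  define m where "m = measure lebesgue A'"
  have m: "m > 0" unfolding m_def A'_def using pos_meas A'm n A'_def by blast
  obtain T where T: "closed T" "T \<subseteq> A'" "A' - T \<in> lmeasurable" "emeasure lebesgue (A' - T) < ennreal (m/8)"
    using sets_lebesgue_inner_closed[of A' "m/8"] A'm m by auto
  have cT: "compact T"
    using T(1,2) unfolding A'_def by (meson bounded_Int bounded_closed_interval bounded_subset compact_eq_bounded_closed)
  have Tm: "T \<in> lmeasurable" using cT by (rule lmeasurable_compact)
  have "measure lebesgue (A' - T) < m/8" using meas_lt[OF T(3) T(4)] m by simp
  moreover have "measure lebesgue A' = measure lebesgue T + measure lebesgue (A' - T)"
    using measure_Un2[OF Tm A'm] T(2) by (simp add: Un_absorb1)
  ultimately have mT: "measure lebesgue T > 7/8 * m" unfolding m_def by linarith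
  obtain U where U: "open U" "T \<subseteq> U" "U - T \<in> lmeasurable" "emeasure lebesgue (U - T) < ennreal (m/8)"
    using sets_lebesgue_outer_open[of T "m/8"] Tm m by auto
  have Um: "U \<in> lmeasurable"
  proof -
    have "U = T \<union> (U - T)" using U(2) by auto
    then show ?thesis using Tm U(3) by (metis fmeasurable.Un)
  qed
  have "measure lebesgue (U - T) < m/8" using meas_lt[OF U(3) U(4)] m by simp
  moreover have "measure lebesgue U = measure lebesgue T + measure lebesgue (U - T)"
    using measure_Un2[OF Tm Um] U(2) by (simp add: Un_absorb1)
  ultimately have "measure lebesgue U < 4/3 * measure lebesgue T" using mT m by linarith
  then obtain c d where cd: "d > 0" "measure lebesgue (T \<inter> {c..c+d}) > 3/4 * d"
    using density_interval[OF cT U(1,2) Um] mT m by auto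
  have "{2*c+d - d/4 <..< 2*c+d+d/4} \<subseteq> A"
  proof
    fix s assume "s \<in> {2*c+d - d/4 <..< 2*c+d+d/4}"
    then have "\<bar>s - (2*c+d)\<bar> < d/4" unfolding abs_less_iff by simp
    then obtain y where "y \<in> T \<inter> {c..c+d}" "s - y \<in> T \<inter> {c..c+d}"
      using steinhaus_sum[of "T \<inter> {c..c+d}" c d s] cd cT by (auto simp: compact_Int_closed)
    then have "y \<in> A" "s - y \<in> A" using T(2) unfolding A'_def by auto
    then have "y + (s - y) \<in> A" by (rule add)
    then show "s \<in> A" by simp
  qed
  moreover have "2*c+d - d/4 < 2*c+d+d/4" using cd by simp
  ultimately show ?thesis by blast
qed

lemma mult_closed:
  assumes "\<And>x y. x \<in> S \<Longrightarrow> y \<in> S \<Longrightarrow> x + y \<in> S" "z \<in> S" "n \<ge> 1"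
  shows "real n * z \<in> S"
  using assms(3)
proof (induction n rule: dec_induct)
  case base then show ?case using assms(2) by simp
next
  case (step m)
  have "real m * z + z \<in> S" using assms(1)[OF step.IH assms(2)] .
  then show ?case by (simp add: algebra_simps)
qed

theorem theorem3p3:
  fixes k :: nat and H :: "nat \<Rightarrow> real set"
  assumes "k \<ge> 2"
    and "(\<Union>i\<in>{1..k}. H i) = {x. x > 0}"
    and "\<And>i j. i \<in> {1..k} \<Longrightarrow> j \<in> {1..k} \<Longrightarrow> i \<noteq> j \<Longrightarrow> H i \<inter> H j = {}"
    and "\<And>i. i \<in> {1..k} \<Longrightarrow> H i \<noteq> {}"
    and "\<And>i x y. i \<in> {1..k} \<Longrightarrow> x \<in> H i \<Longrightarrow> y \<in> H i \<Longrightarrow> x + y \<in> H i"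
    and "\<And>i x y. i \<in> {1..k} \<Longrightarrow> x \<in> H i \<Longrightarrow> y \<in> H i \<Longrightarrow> x * y \<in> H i"
  shows "\<exists>i\<in>{1..k}. H i \<notin> sets lebesgue"
proof (rule ccontr)
  assume "\<not> ?thesis"
  then have meas: "\<And>i. i \<in> {1..k} \<Longrightarrow> H i \<in> sets lebesgue" by blast
  have "\<exists>i\<in>{1..k}. H i \<notin> null_sets lebesgue"
  proof (rule ccontr)
    assume "\<not> ?thesis"
    then have "(\<Union>i\<in>{1..k}. H i) \<in> null_sets lebesgue" by (intro null_sets.finite_UN) auto
    then have "{x::real. x > 0} \<in> null_sets lebesgue" using assms(2) by simp
    then have "{1..2::real} \<in> null_sets lebesgue" by (rule null_sets_subset) auto
    then show False by (simp add: null_sets_def)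
  qed
  then obtain i where i: "i \<in> {1..k}" "H i \<notin> null_sets lebesgue" by blast
  obtain \<alpha> \<beta> where ab: "\<alpha> < \<beta>" "{\<alpha><..<\<beta>} \<subseteq> H i"
    using interval_in_semigroup[OF meas[OF i(1)] i(2)] assms(5)[OF i(1)] by blast
  have Hpos: "\<And>l z. l \<in> {1..k} \<Longrightarrow> z \<in> H l \<Longrightarrow> z > 0" using assms(2) by blast
  have "(\<alpha>+\<beta>)/2 \<in> H i" using ab by auto
  then have "(\<alpha>+\<beta>)/2 > 0" using Hpos i(1) by blast
  then have b0: "\<beta> > 0" using ab(1) by (simp add: field_simps)
  define \<alpha>' where "\<alpha>' = max \<alpha> 0"
  have a'b: "\<alpha>' < \<beta>" "\<alpha>' \<ge> 0" "{\<alpha>'<..<\<beta>} \<subseteq> H i" using ab b0 by (auto simp: \<alpha>'_def)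
  define j where "j = (if i = 1 then 2 else (1::nat))"
  have j: "j \<in> {1..k}" "j \<noteq> i" using assms(1) i(1) by (auto simp: j_def)
  obtain x where x: "x \<in> H j" using assms(4)[OF j(1)] by blast
  have x0: "x > 0" using Hpos[OF j(1) x] .
  obtain q where q: "q \<in> \<rat>" "\<alpha>'/x < q" "q < \<beta>/x"
    using Rats_dense_in_real[of "\<alpha>'/x" "\<beta>/x"] a'b x0 by (auto simp: divide_strict_right_mono)
  obtain a b where ab': "b > 0" "q = of_int a / of_int b"
    using Rats_cases'[OF q(1)] by metis
  have q0: "q > 0" using q a'b x0 by (meson divide_nonneg_pos le_less_trans)
  then have a0: "a > 0" using ab' by (simp add: zero_less_divide_iff)
  define p r where "p = nat a" and "r = nat b"
  have pr: "p \<ge> 1" "r \<ge> 1" "q = real p / real r" using a0 ab' by (auto simp: p_def r_def)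
  have px: "real p * x \<in> H j" using mult_closed[OF assms(5)[OF j(1)] x pr(1)] by blast
  define y where "y = real p * x / real r"
  have "\<alpha>' < q * x" "q * x < \<beta>" using q x0 by (auto simp: field_simps)
  then have "y \<in> {\<alpha>'<..<\<beta>}" unfolding y_def using pr by simp
  then have "y \<in> H i" using a'b by blast
  then have "real r * y \<in> H i" using mult_closed[OF assms(5)[OF i(1)] _ pr(2)] by blast
  moreover have "real r * y = real p * x" unfolding y_def using pr by simp
  ultimately have "real p * x \<in> H i \<inter> H j" using px by simp
  then show False using assms(3)[OF i(1) j(1)] j(2) by auto
qed

end
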